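(* Consider the discrete-time system $x(t+1) = A x(t) + B u(t) + C v(t) + w$ with $A \in \mathbb{R}^{d_x\times d_x}$, $B\in\mathbb{R}^{d_x\times d_u}$, $C \in\mathbb{R}^{d_x\times d_v}$, constant $w\in\mathbb{R}^{d_x}$, control constraint $\mathcal U = \{u\in\mathbb{R}^{d_u}\mid \underline u\leq u\leq\overline u\}$ (with $\underline u \leq \overline u$), disturbance constraint $\mathcal V = \langle c_{\mathcal V}\mid G_{\mathcal V}\rangle$ with $G_{\mathcal V}\in\mathbb{R}^{d_v\times n_{\mathcal V}}$, and state constraint $\mathcal X = \{x\in\mathbb{R}^{d_x}\mid\underline x\leq x\leq\overline x\}$. Let $T\geq 0$ be an integer. Let $G_{\mathcal I} \in \mathbb{R}^{d_x\times n_{\mathcal I}}$, $\alpha \in \mathbb{R}^{d_x}$, $\gamma\in\mathbb{R}^{n_{\mathcal I}}$ with $\gamma \geq 0$, $\Gamma = \mathrm{diag}(\gamma)$, $\mathcal I = \langle \alpha \mid G_{\mathcal I}\Gamma\rangle$. For $t = 0,\ldots,T-1$ let $\beta(t)\in\mathbb{R}^{d_u}$, $\Phi(t)\in\mathbb{R}^{d_u\times n_{\mathcal I}}$, $G_{\mathcal F(t)}\in\mathbb{R}^{d_u\times m_t}$ and $\psi(t)\in\mathbb{R}^{m_t}$ with $\psi(t)\geq 0$. Suppose that for all $t = 0,\ldots,T$ \[ A^t\alpha + \sum_{s=0}^{t-1}A^{t-1-s}\big(B\beta(s) + Cc_{\mathcal V} + w\big) - \Big|A^tG_{\mathcal I}\Gamma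 + \sum_{s=0}^{t-1}A^{t-1-s}B\Phi(s)\Big|\mathbf{1}_{n_{\mathcal I}} - \sum_{s=0}^{t-1}|A^{t-1-s}BG_{\mathcal F(s)}|\psi(s) - \sum_{s=0}^{t-1}|A^{t-1-s}CG_{\mathcal V}|\mathbf{1}_{n_{\mathcal V}} \geq \underline x, \] \[ A^t\alpha + \sum_{s=0}^{t-1}A^{t-1-s}\big(B\beta(s) + Cc_{\mathcal V} + w\big) + \Big|A^tG_{\mathcal I}\Gamma + \sum_{s=0}^{t-1}A^{t-1-s}B\Phi(s)\Big|\mathbf{1}_{n_{\mathcal I}} + \sum_{s=0}^{t-1}|A^{t-1-s}BG_{\mathcal F(s)}|\psi(s) + \sum_{s=0}^{t-1}|A^{t-1-s}CG_{\mathcal V}|\mathbf{1}_{n_{\mathcal V}} \leq \overline x, \] and that for all $t = 0,\ldots,T-1$ \[ \beta(t) - |\Phi(t)|\mathbf{1}_{n_{\mathcal I}} - |G_{\mathcal F(t)}|\psi(t) \geq \underline u, \qquad \beta(t) + |\Phi(t)|\mathbf{1}_{n_{\mathcal I}} + |G_{\mathcal F(t)}|\psi(t) \leq \overline u. \] Then $\mathcal I \subseteq \mathrm{Disc}_{[0,T]}(\mathcal X)$, where $\mathrm{Disc}_{[0,T]}(\mathcal X)$ is the set of $x(0)\in\mathcal X$ for which there exists an input signal with $u(t)\in\mathcal U$ for $t=0,\ldots,T$ such that for every disturbance signal with $v(t)\in\mathcal V$ for $t = 0,\ldots,T$, the resulting trajectory satisfies $x(t)\in\mathcal X$ for all $t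=0,\ldots,T$.
   Context: Vector inequalities are elementwise; $|M|$ is the elementwise absolute value; $\mathbf{1}_n$ is the all-ones vector in $\mathbb{R}^n$. The notation $\langle c \mid G\rangle$ denotes the zonotope $\{c + G\lambda : \lambda \in [-1,1]^n\}$ with center $c$ and generator matrix $G$. $\mathrm{diag}(\gamma)$ is the diagonal matrix with $\gamma$ on its diagonal. *)

theory Defs
  imports "HOL-Analysis.Analysis"
begin

primrec matpow :: "real^'n^'n \<Rightarrow> nat \<Rightarrow> real^'n^'n" where
  "matpow A 0 = mat 1"
| "matpow A (Suc k) = A ** matpow A k"

definition vabs :: "real^'n \<Rightarrow> real^'n" where
  "vabs x = (\<chi> i. \<bar>x $ i\<bar>)"

definition mabs :: "real^'n^'m \<Rightarrow> real^'n^'m" where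
  "mabs M = (\<chi> i j. \<bar>M $ i $ j\<bar>)"

definition ones :: "real^'n" where
  "ones = (\<chi> i. 1)"

definition diagm :: "real^'n \<Rightarrow> real^'n^'n" where
  "diagm g = (\<chi> i j. if i = j then g $ i else 0)"

definition zonotope :: "real^'m \<Rightarrow> real^'n^'m \<Rightarrow> (real^'m) set" where
  "zonotope c G = {c + G *v lam | lam. \<forall>i. \<bar>lam $ i\<bar> \<le> 1}"

text \<open>A matrix with a variable number m of columns is given as the list of its columns
  col 0, ..., col (m-1).  absprod M col psi m = |M G| psi where G = [col 0 ... col (m-1)].\<close>
definition absprod :: "real^'k^'m \<Rightarrow> (nat \<Rightarrow> real^'k) \<Rightarrow> (nat \<Rightarrow> real) \<Rightarrow> nat \<Rightarrow> real^'m" where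
  "absprod M col psi m = (\<Sum>j<m. psi j *\<^sub>R vabs (M *v col j))"

primrec traj :: "real^'x^'x \<Rightarrow> real^'u^'x \<Rightarrow> real^'v^'x \<Rightarrow> real^'x \<Rightarrow> real^'x
      \<Rightarrow> (nat \<Rightarrow> real^'u) \<Rightarrow> (nat \<Rightarrow> real^'v) \<Rightarrow> nat \<Rightarrow> real^'x" where
  "traj A B C w x0 u v 0 = x0"
| "traj A B C w x0 u v (Suc t) = A *v traj A B C w x0 u v t + B *v u t + C *v v t + w"

definition Disc :: "real^'x^'x \<Rightarrow> real^'u^'x \<Rightarrow> real^'v^'x \<Rightarrow> real^'x
      \<Rightarrow> (real^'u) set \<Rightarrow> (real^'v) set \<Rightarrow> nat \<Rightarrow> (real^'x) set \<Rightarrow> (real^'x) set" where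
  "Disc A B C w U V T X = {x0 \<in> X. \<exists>u. (\<forall>t\<le>T. u t \<in> U) \<and>
      (\<forall>v. (\<forall>t\<le>T. v t \<in> V) \<longrightarrow> (\<forall>t\<le>T. traj A B C w x0 u v t \<in> X))}"

end

theory Submission
  imports Defs
begin

lemma mv_sum: "(M::real^'n^'m) *v (\<Sum>s\<in>S. f s) = (\<Sum>s\<in>S. M *v f s)"
proof (cases "finite S")
  case True then show ?thesis by (induction S rule: finite_induct) (auto simp: matrix_vector_right_distrib)
qed simp

lemma sum_mv: "(\<Sum>s\<in>S. (M s::real^'n^'m)) *v x = (\<Sum>s\<in>S. M s *v x)"
proof (cases "finite S")
  case True then show ?thesis by (induction S rule: finite_induct) (auto simp: matrix_vector_mult_add_rdistrib)
qed simp

lemma traj_formula: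
  "traj A B C w x0 u v t = matpow A t *v x0 + (\<Sum>s<t. matpow A (t-1-s) *v (B *v u s + C *v v s + w))"
proof (induction t)
  case 0 then show ?case by simp
next
  case (Suc t)
  have e: "(\<Sum>s<t. matpow A (Suc t-1-s) *v y s) = A *v (\<Sum>s<t. matpow A (t-1-s) *v y s)" for y
    unfolding mv_sum
  proof (rule sum.cong)
    fix s assume "s \<in> {..<t}"
    then have "Suc t - 1 - s = Suc (t-1-s)" by auto
    then show "matpow A (Suc t-1-s) *v y s = A *v (matpow A (t-1-s) *v y s)"
      by (simp add: matrix_vector_mul_assoc)
  qed simp
  define y where "y = (\<lambda>s. B *v u s + C *v v s + w)"
  have "traj A B C w x0 u v (Suc t) = A *v (matpow A t *v x0 + (\<Sum>s<t. matpow A (t-1-s) *v y s)) + y t"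
    using Suc by (simp add: y_def)
  also have "\<dots> = matpow A (Suc t) *v x0 + (\<Sum>s<t. matpow A (Suc t-1-s) *v y s) + y t"
    by (simp only: e matrix_vector_right_distrib matrix_vector_mul_assoc matpow.simps)
  also have "\<dots> = matpow A (Suc t) *v x0 + (\<Sum>s<Suc t. matpow A (Suc t-1-s) *v y s)"
    by simp
  finally show ?case by (simp only: y_def)
qed

lemma abs_mv_le:
  assumes "\<forall>j. \<bar>lam $ j\<bar> \<le> 1"
  shows "\<bar>((M::real^'n^'m) *v lam) $ i\<bar> \<le> (mabs M *v ones) $ i"
proof -
  have "\<bar>(M *v lam) $ i\<bar> = \<bar>\<Sum>j\<in>UNIV. M$i$j * lam$j\<bar>" by (simp add: matrix_vector_mult_def)
  also have "\<dots> \<le> (\<Sum>j\<in>UNIV. \<bar>M$i$j * lam$j\<bar>)" by (rule sum_abs)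
  also have "\<dots> \<le> (\<Sum>j\<in>UNIV. \<bar>M$i$j\<bar>)"
    by (rule sum_mono) (use assms in \<open>auto simp: abs_mult intro: mult_left_le\<close>)
  also have "\<dots> = (mabs M *v ones) $ i" by (simp add: matrix_vector_mult_def mabs_def ones_def)
  finally show ?thesis .
qed

lemma absprod_nonneg:
  assumes "\<forall>j<k. p j \<ge> 0"
  shows "absprod M col p k $ i \<ge> 0"
  unfolding absprod_def using assms by (auto simp: vabs_def intro!: sum_nonneg)

theorem proposition6p2:
  fixes A :: "real^'x^'x" and B :: "real^'u^'x" and C :: "real^'v^'x" and w :: "real^'x"
    and ulo uhi :: "real^'u" and xlo xhi :: "real^'x"
    and cV :: "real^'v" and GV :: "real^'nv^'v"
    and T :: nat
    and GI :: "real^'ni^'x" and \<alpha> :: "real^'x" and \<gamma> :: "real^'ni"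
    and \<beta> :: "nat \<Rightarrow> real^'u" and \<Phi> :: "nat \<Rightarrow> real^'ni^'u"
    and m :: "nat \<Rightarrow> nat" and GF :: "nat \<Rightarrow> nat \<Rightarrow> real^'u" and \<psi> :: "nat \<Rightarrow> nat \<Rightarrow> real"
  assumes ulo_uhi: "ulo \<le> uhi"
    and gamma_nonneg: "\<gamma> \<ge> 0"
    and psi_nonneg: "\<forall>t<T. \<forall>j<m t. \<psi> t j \<ge> 0"
    and state_lo: "\<forall>t\<le>T.
       matpow A t *v \<alpha> + (\<Sum>s<t. matpow A (t-1-s) *v (B *v \<beta> s + C *v cV + w))
       - mabs (matpow A t ** GI ** diagm \<gamma> + (\<Sum>s<t. matpow A (t-1-s) ** B ** \<Phi> s)) *v ones
       - (\<Sum>s<t. absprod (matpow A (t-1-s) ** B) (GF s) (\<psi> s) (m s))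
       - (\<Sum>s<t. mabs (matpow A (t-1-s) ** C ** GV) *v ones) \<ge> xlo"
    and state_hi: "\<forall>t\<le>T.
       matpow A t *v \<alpha> + (\<Sum>s<t. matpow A (t-1-s) *v (B *v \<beta> s + C *v cV + w))
       + mabs (matpow A t ** GI ** diagm \<gamma> + (\<Sum>s<t. matpow A (t-1-s) ** B ** \<Phi> s)) *v ones
       + (\<Sum>s<t. absprod (matpow A (t-1-s) ** B) (GF s) (\<psi> s) (m s))
       + (\<Sum>s<t. mabs (matpow A (t-1-s) ** C ** GV) *v ones) \<le> xhi"
    and input_lo: "\<forall>t<T. \<beta> t - mabs (\<Phi> t) *v ones - absprod (mat 1) (GF t) (\<psi> t) (m t) \<ge> ulo"
    and input_hi: "\<forall>t<T. \<beta> t + mabs (\<Phi> t) *v ones + absprod (mat 1) (GF t) (\<psi> t) (m t) \<le> uhi"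
  shows "zonotope \<alpha> (GI ** diagm \<gamma>)
         \<subseteq> Disc A B C w {u. ulo \<le> u \<and> u \<le> uhi} (zonotope cV GV) T {x. xlo \<le> x \<and> x \<le> xhi}"
proof
  fix x0 assume "x0 \<in> zonotope \<alpha> (GI ** diagm \<gamma>)"
  then obtain lam where x0: "x0 = \<alpha> + (GI ** diagm \<gamma>) *v lam" and lam: "\<forall>i. \<bar>lam $ i\<bar> \<le> 1"
    by (auto simp: zonotope_def)
  define u where "u t = (if t < T then \<beta> t + \<Phi> t *v lam else ulo)" for t
  have uU: "\<forall>t\<le>T. u t \<in> {u. ulo \<le> u \<and> u \<le> uhi}"
  proof (intro allI impI)
    fix t assume "t \<le> T"
    show "u t \<in> {u. ulo \<le> u \<and> u \<le> uhi}"
    proof (cases "t < T")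
      case True
      have "ulo $ i \<le> u t $ i \<and> u t $ i \<le> uhi $ i" for i
      proof -
        have lo: "ulo $ i \<le> \<beta> t $ i - (mabs (\<Phi> t) *v ones) $ i - absprod (mat 1) (GF t) (\<psi> t) (m t) $ i"
          using input_lo True by (auto simp: less_eq_vec_def)
        have hi: "\<beta> t $ i + (mabs (\<Phi> t) *v ones) $ i + absprod (mat 1) (GF t) (\<psi> t) (m t) $ i \<le> uhi $ i"
          using input_hi True by (auto simp: less_eq_vec_def)
        have p: "absprod (mat 1) (GF t) (\<psi> t) (m t) $ i \<ge> 0"
          using psi_nonneg True by (intro absprod_nonneg) auto
        have b: "\<bar>(\<Phi> t *v lam) $ i\<bar> \<le> (mabs (\<Phi> t) *v ones) $ i" using lam by (rule abs_mv_le)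
        show ?thesis using lo hi p b True by (auto simp: u_def)
      qed
      then show ?thesis by (simp add: less_eq_vec_def)
    qed (use ulo_uhi in \<open>simp add: u_def\<close>)
  qed
  have main: "\<forall>t\<le>T. traj A B C w x0 u v t \<in> {x. xlo \<le> x \<and> x \<le> xhi}"
    if vV: "\<forall>t\<le>T. v t \<in> zonotope cV GV" for v
  proof (intro allI impI)
    fix t assume tT: "t \<le> T"
    define mu where "mu s = (SOME l. v s = cV + GV *v l \<and> (\<forall>i. \<bar>l $ i\<bar> \<le> 1))" for s
    have mu: "v s = cV + GV *v mu s \<and> (\<forall>i. \<bar>mu s $ i\<bar> \<le> 1)" if "s \<le> T" for s
    proof -
      have "\<exists>l. v s = cV + GV *v l \<and> (\<forall>i. \<bar>l $ i\<bar> \<le> 1)"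
        using vV that by (auto simp: zonotope_def)
      then show ?thesis unfolding mu_def by (rule someI_ex)
    qed
    define D where "D = matpow A t *v \<alpha> + (\<Sum>s<t. matpow A (t-1-s) *v (B *v \<beta> s + C *v cV + w))"
    define M where "M = matpow A t ** GI ** diagm \<gamma> + (\<Sum>s<t. matpow A (t-1-s) ** B ** \<Phi> s)"
    define N where "N s = matpow A (t-1-s) ** C ** GV" for s
    have eq: "traj A B C w x0 u v t = D + M *v lam + (\<Sum>s<t. N s *v mu s)"
    proof -
      have "(\<Sum>s<t. matpow A (t-1-s) *v (B *v u s + C *v v s + w))
          = (\<Sum>s<t. matpow A (t-1-s) *v (B *v \<beta> s + C *v cV + w) + (matpow A (t-1-s) ** B ** \<Phi> s) *v lam + N s *v mu s)"
      proof (rule sum.cong)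
        fix s assume "s \<in> {..<t}"
        then have "s < T" "s \<le> T" using tT by auto
        then show "matpow A (t-1-s) *v (B *v u s + C *v v s + w)
          = matpow A (t-1-s) *v (B *v \<beta> s + C *v cV + w) + (matpow A (t-1-s) ** B ** \<Phi> s) *v lam + N s *v mu s"
          using mu[of s] by (simp add: u_def N_def matrix_vector_right_distrib matrix_vector_mul_assoc matrix_mul_assoc algebra_simps)
      qed simp
      then show ?thesis
        by (simp add: traj_formula x0 D_def M_def sum.distrib sum_mv matrix_vector_right_distrib
            matrix_vector_mult_add_rdistrib matrix_vector_mul_assoc matrix_mul_assoc algebra_simps)
    qed
    have "xlo $ i \<le> traj A B C w x0 u v t $ i \<and> traj A B C w x0 u v t $ i \<le> xhi $ i" for i
    proof -
      define P where "P = (\<Sum>s<t. absprod (matpow A (t-1-s) ** B) (GF s) (\<psi> s) (m s))"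
      define Q where "Q = (\<Sum>s<t. mabs (N s) *v ones)"
      have lo: "xlo $ i \<le> D $ i - (mabs M *v ones) $ i - P $ i - Q $ i"
        using state_lo tT unfolding D_def M_def P_def Q_def N_def by (auto simp: less_eq_vec_def)
      have hi: "D $ i + (mabs M *v ones) $ i + P $ i + Q $ i \<le> xhi $ i"
        using state_hi tT unfolding D_def M_def P_def Q_def N_def by (auto simp: less_eq_vec_def)
      have p: "P $ i \<ge> 0" unfolding P_def sum_component
        using psi_nonneg tT by (intro sum_nonneg absprod_nonneg) auto
      have b1: "\<bar>(M *v lam) $ i\<bar> \<le> (mabs M *v ones) $ i" using lam by (rule abs_mv_le)
      have "\<bar>(\<Sum>s<t. N s *v mu s) $ i\<bar> \<le> (\<Sum>s<t. \<bar>(N s *v mu s) $ i\<bar>)"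
        unfolding sum_component by (rule sum_abs)
      also have "\<dots> \<le> Q $ i" unfolding Q_def sum_component
        using mu tT by (intro sum_mono abs_mv_le) auto
      finally have b2: "\<bar>(\<Sum>s<t. N s *v mu s) $ i\<bar> \<le> Q $ i" .
      show ?thesis unfolding eq using lo hi p b1 b2 by auto
    qed
    then show "traj A B C w x0 u v t \<in> {x. xlo \<le> x \<and> x \<le> xhi}" by (simp add: less_eq_vec_def)
  qed
  have "\<forall>t\<le>T. (\<lambda>_. cV) t \<in> zonotope cV GV"
    by (auto simp: zonotope_def intro!: exI[of _ 0])
  from main[OF this] have "traj A B C w x0 u (\<lambda>_. cV) 0 \<in> {x. xlo \<le> x \<and> x \<le> xhi}" by blast
  then have "x0 \<in> {x. xlo \<le> x \<and> x \<le> xhi}" by simp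
  then show "x0 \<in> Disc A B C w {u. ulo \<le> u \<and> u \<le> uhi} (zonotope cV GV) T {x. xlo \<le> x \<and> x \<le> xhi}"
    unfolding Disc_def using uU main by blast
qed

end
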